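(* Let $H \subset L$ be light-cone regular and assume that the equation $f_h = \Phi(f_{h+v_1},\ldots,f_{h+v_N})$ has the Laurent property, the irreducibility and the coprimeness on $H$. Then it also has these three properties when considered over the coefficient field $K$: for every $h \in H \setminus H_0$, $f_h$ is an irreducible element of $K_{H_0}$, and for every pair $h_1, h_2 \in H$ with $h_1 \neq h_2$, $f_{h_1}$ and $f_{h_2}$ are coprime in $K_{H_0}$.
   Context: Let $R$ be a unique factorization domain with field of fractions $K$. Let $L$ be a finitely generated $\mathbb{Z}$-module (possibly with torsion). Fix distinct $v_1,\dots,v_N\in L$ which generate $L$ and are linearly independent over $\mathbb{Z}_{\ge 0}$ (i.e. $\sum_i a_i v_i=0$ with all $a_i\in\mathbb{Z}_{\ge0}$ forces all $a_i=0$), and an irreducible Laurent polynomial $\Phi\in R[Y_1^{\pm1},\dots,Y_N^{\pm1}]$ which is not a Laurent monomial and depends on every variable. Consider the equation $f_h=\Phi(f_{h+v_1},\dots,f_{h+v_N})$ ($h\in L$). Let $S=\{\sum_i a_iv_i : a_i\in\mathbb{Z}_{\ge0}\}$ and $h_1\le h_2$ iff $h_1-h_2\in S$. Assume $v_N$ is the minimum of $\{0,v_1,\dots,v_N\}$ for $\le$ and the equation can be solved as $f_{h+v_N}=\Psi(f_{h+v_1},\dots,f_{h+v_{N-1}},f_h)$ with $\Psi$ an irreducible Laurent polynomial over $R$. A nonempty $H\subset L$ is light-cone regular if for every $h\in H$ the set $\{h'\in H: h'\le h\}$ is finite and $\{h'\in L: h'\ge h\}\subset H$; its initial boundary is $H_0=\{h\in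 H:\ h+v_i\notin H\text{ for some }i\}$. The $f_{h}$ ($h\in H_0$) are algebraically independent indeterminates over $K$, and for $h\in H\setminus H_0$, $f_h$ is defined recursively by the equation in $K(f_{h_0}: h_0\in H_0)$. For $T\subset L$, $R_T=R[f_h^{\pm1}: h\in T]$, $K_T=K[f_h^{\pm1}: h\in T]$. Laurent property on $H$: $f_h\in R_{H_0}$ for all $h\in H$; irreducibility: every $f_h$ ($h\in H$) is irreducible in $R_{H_0}$ (units count as irreducible); coprimeness: $f_{h_1},f_{h_2}$ coprime in $R_{H_0}$ for all $h_1\neq h_2$ in $H$. *)

theory Defs
  imports "HOL-Library.Poly_Mapping" "HOL-Computational_Algebra.Factorial_Ring"
          "HOL-Computational_Algebra.Fraction_Field"
begin

text \<open>Laurent polynomials in variables of type 'v with coefficients in 'a: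
  finitely supported maps from Laurent monomials (finitely supported integer
  exponent vectors) to coefficients; multiplication is convolution.\<close>
type_synonym ('v, 'a) lpoly = "('v \<Rightarrow>\<^sub>0 int) \<Rightarrow>\<^sub>0 'a"

definition lvar :: "'v \<Rightarrow> ('v, 'a::{zero,one}) lpoly" where
  "lvar v = Poly_Mapping.single (Poly_Mapping.single v 1) 1"

definition lconst :: "'a::zero \<Rightarrow> ('v, 'a) lpoly" where
  "lconst c = Poly_Mapping.single 0 c"

definition lpoly_in :: "'v set \<Rightarrow> ('v, 'a::zero) lpoly set" where
  "lpoly_in T = {p :: ('v, 'a) lpoly. \<forall>m\<in>Poly_Mapping.keys p. Poly_Mapping.keys m \<subseteq> T}"

definition unit_in :: "'a::comm_ring_1 set \<Rightarrow> 'a \<Rightarrow> bool" where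
  "unit_in S u \<longleftrightarrow> u \<in> S \<and> (\<exists>w\<in>S. u * w = 1)"

definition dvd_in :: "'a::comm_ring_1 set \<Rightarrow> 'a \<Rightarrow> 'a \<Rightarrow> bool" where
  "dvd_in S a b \<longleftrightarrow> a \<in> S \<and> b \<in> S \<and> (\<exists>c\<in>S. b = a * c)"

text \<open>Irreducible in S, where (as in the paper) units count as irreducible.\<close>
definition irred_in :: "'a::comm_ring_1 set \<Rightarrow> 'a \<Rightarrow> bool" where
  "irred_in S x \<longleftrightarrow> x \<in> S \<and> x \<noteq> 0 \<and>
     (\<forall>a\<in>S. \<forall>b\<in>S. x = a * b \<longrightarrow> unit_in S a \<or> unit_in S b)"

definition coprime_in :: "'a::comm_ring_1 set \<Rightarrow> 'a \<Rightarrow> 'a \<Rightarrow> bool" where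
  "coprime_in S x y \<longleftrightarrow> (\<forall>d. dvd_in S d x \<and> dvd_in S d y \<longrightarrow> unit_in S d)"

text \<open>\<open>lpoly_sat N P c x y\<close> expresses y = P(x_0,...,x_{N-1}) for a Laurent
  polynomial P in the variables 0..N-1 (coefficients mapped by c), in
  denominator-cleared form: for every exponent vector d making P * Y^d a
  polynomial, y * x^d = (P * Y^d)(x).\<close>
definition lpoly_sat :: "nat \<Rightarrow> (nat, 'a::zero) lpoly \<Rightarrow> ('a \<Rightarrow> 'b::comm_ring_1)
     \<Rightarrow> (nat \<Rightarrow> 'b) \<Rightarrow> 'b \<Rightarrow> bool" where
  "lpoly_sat N P c x y \<longleftrightarrow>
     (\<forall>d::nat \<Rightarrow> nat. (\<forall>m\<in>Poly_Mapping.keys P. \<forall>i<N. 0 \<le> Poly_Mapping.lookup m i + int (d i)) \<longrightarrow>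
        y * (\<Prod>i<N. x i ^ d i) =
        (\<Sum>m\<in>Poly_Mapping.keys P. c (Poly_Mapping.lookup P m) * (\<Prod>i<N. x i ^ nat (Poly_Mapping.lookup m i + int (d i)))))"

definition fract_of :: "'a::idom \<Rightarrow> 'a fract" where
  "fract_of r = Fract r 1"

definition nsm :: "nat \<Rightarrow> 'l::ab_group_add \<Rightarrow> 'l" where
  "nsm n y = (\<Sum>_\<in>{..<n}. y)"

definition cone :: "nat \<Rightarrow> (nat \<Rightarrow> 'l::ab_group_add) \<Rightarrow> 'l set" where
  "cone N v = {\<Sum>i<N. nsm (a i) (v i) | a. True}"

definition cle :: "nat \<Rightarrow> (nat \<Rightarrow> 'l::ab_group_add) \<Rightarrow> 'l \<Rightarrow> 'l \<Rightarrow> bool" where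
  "cle N v h1 h2 \<longleftrightarrow> h1 - h2 \<in> cone N v"

definition light_cone_regular :: "nat \<Rightarrow> (nat \<Rightarrow> 'l::ab_group_add) \<Rightarrow> 'l set \<Rightarrow> bool" where
  "light_cone_regular N v H \<longleftrightarrow> H \<noteq> {} \<and>
     (\<forall>h\<in>H. finite {h'\<in>H. cle N v h' h} \<and> {h'. cle N v h h'} \<subseteq> H)"

definition init_boundary :: "nat \<Rightarrow> (nat \<Rightarrow> 'l::ab_group_add) \<Rightarrow> 'l set \<Rightarrow> 'l set" where
  "init_boundary N v H = {h\<in>H. \<exists>i<N. h + v i \<notin> H}"

end

theory Submission
  imports Defs
begin

lemma lookup_mult_sum:
  fixes f g :: "'m::monoid_add \<Rightarrow>\<^sub>0 'a::semiring_0"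
  assumes "finite A" "finite B" "Poly_Mapping.keys f \<subseteq> A" "Poly_Mapping.keys g \<subseteq> B"
  shows "Poly_Mapping.lookup (f * g) k =
    (\<Sum>l\<in>A. \<Sum>q\<in>B. (Poly_Mapping.lookup f l * Poly_Mapping.lookup g q when k = l + q))"
proof -
  have fA: "Poly_Mapping.lookup f l \<noteq> 0 \<Longrightarrow> l \<in> A" for l using assms(3) by (meson in_keys_iff subsetD)
  have inner: "(\<Sum>q. (Poly_Mapping.lookup g q when k = l + q)) = (\<Sum>q\<in>B. (Poly_Mapping.lookup g q when k = l + q))" for l
    by (rule Sum_any.expand_superset) (use assms in \<open>auto simp: in_keys_iff\<close>)
  have "Poly_Mapping.lookup (f * g) k = (\<Sum>l. Poly_Mapping.lookup f l * (\<Sum>q\<in>B. (Poly_Mapping.lookup g q when k = l + q)))"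
    by (simp add: lookup_mult inner)
  also have "\<dots> = (\<Sum>l\<in>A. Poly_Mapping.lookup f l * (\<Sum>q\<in>B. (Poly_Mapping.lookup g q when k = l + q)))"
    apply (rule Sum_any.expand_superset[OF assms(1)])
    using fA by (metis (mono_tags) mem_Collect_eq mult_zero_left subsetI)
  also have "\<dots> = (\<Sum>l\<in>A. \<Sum>q\<in>B. (Poly_Mapping.lookup f l * Poly_Mapping.lookup g q when k = l + q))"
    by (simp add: sum_distrib_left mult_when)
  finally show ?thesis .
qed

lemma lconst_mult_eq_map: "lconst c * x = Poly_Mapping.map ((*) c) x"
  by (simp add: lconst_def mult_map_scale_conv_mult)

lemma lookup_lconst_mult [simp]:
  "Poly_Mapping.lookup (lconst c * x) m = c * Poly_Mapping.lookup x m"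
  by (simp add: lconst_mult_eq_map map.rep_eq when_def)

lemma lconst_mult_lconst: "lconst a * lconst b = lconst (a * b)"
  by (simp add: lconst_def mult_single)

lemma lconst_one [simp]: "lconst 1 = 1"
  by (simp add: lconst_def)

lemma lconst_mult_assoc: "lconst a * (lconst b * x) = lconst (a * b) * x"
  by (simp add: mult.assoc[symmetric] lconst_mult_lconst)

lemma keys_lconst: "Poly_Mapping.keys (lconst c) \<subseteq> {0}"
  by (simp add: lconst_def)

lemma keys_lconst_mult:
  fixes x :: "('v, 'a::idom) lpoly"
  shows "c \<noteq> 0 \<Longrightarrow> Poly_Mapping.keys (lconst c * x) = Poly_Mapping.keys x"
  by (auto simp: in_keys_iff)

lemma lconst_cancel:
  fixes x y :: "('v, 'a::idom) lpoly"
  assumes "c \<noteq> 0" "lconst c * x = lconst c * y" shows "x = y"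
proof (rule poly_mapping_eqI)
  fix k
  have "Poly_Mapping.lookup (lconst c * x) k = Poly_Mapping.lookup (lconst c * y) k" using assms by metis
  then show "Poly_Mapping.lookup x k = Poly_Mapping.lookup y k" using assms(1) by simp
qed

lemma coeff_dvd_lconst:
  fixes x :: "('v, 'a::algebraic_semidom) lpoly"
  assumes "c \<noteq> 0" "\<forall>m. c dvd Poly_Mapping.lookup x m"
  shows "x = lconst c * Poly_Mapping.map (\<lambda>z. z div c) x"
proof (rule poly_mapping_eqI)
  fix k show "Poly_Mapping.lookup x k = Poly_Mapping.lookup (lconst c * Poly_Mapping.map (\<lambda>z. z div c) x) k"
    using assms(2)[rule_format, of k] by (auto simp add: map.rep_eq when_def dvd_mult_div_cancel)
qed

lemma lpoly_in_keys_subset: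
  "b \<in> lpoly_in T \<Longrightarrow> Poly_Mapping.keys a \<subseteq> Poly_Mapping.keys b \<Longrightarrow> a \<in> lpoly_in T"
  by (auto simp: lpoly_in_def)

lemma lpoly_in_lconst: "lconst c \<in> lpoly_in T"
  by (auto simp: lpoly_in_def lconst_def)

lemma lpoly_in_mult:
  fixes a b :: "('v, 'a::comm_semiring_0) lpoly"
  assumes "a \<in> lpoly_in T" "b \<in> lpoly_in T" shows "a * b \<in> lpoly_in T"
proof -
  have "Poly_Mapping.keys m \<subseteq> T" if mk: "m \<in> Poly_Mapping.keys (a * b)" for m
  proof -
    obtain x y where xy: "m = x + y" "x \<in> Poly_Mapping.keys a" "y \<in> Poly_Mapping.keys b"
      using keys_mult mk by blast
    have "Poly_Mapping.keys x \<subseteq> T" "Poly_Mapping.keys y \<subseteq> T" using assms xy unfolding lpoly_in_def by auto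
    then show ?thesis using keys_add[of x y] xy(1) by blast
  qed
  then show ?thesis by (simp add: lpoly_in_def)
qed

lemma lpoly_in_one: "(1::('v,'a::comm_semiring_1) lpoly) \<in> lpoly_in T"
  by (simp add: lpoly_in_def)

definition agree :: "'v set \<Rightarrow> ('v, 'a::zero) lpoly \<Rightarrow> bool" where
  "agree V a \<longleftrightarrow> (\<forall>m\<in>Poly_Mapping.keys a. \<forall>m'\<in>Poly_Mapping.keys a. \<forall>w. w \<notin> V \<longrightarrow>
      Poly_Mapping.lookup m w = Poly_Mapping.lookup m' w)"

definition slice :: "'v \<Rightarrow> int \<Rightarrow> ('v, 'a::zero) lpoly \<Rightarrow> ('v, 'a) lpoly" where
  "slice v c a = Poly_Mapping.mapp (\<lambda>m z. if Poly_Mapping.lookup m v = c then z else 0) a"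

lemma lookup_slice:
  "Poly_Mapping.lookup (slice v c a) m = (if Poly_Mapping.lookup m v = c then Poly_Mapping.lookup a m else 0)"
  by (simp add: slice_def lookup_mapp when_def in_keys_iff)

lemma keys_slice: "Poly_Mapping.keys (slice v c a) = {m\<in>Poly_Mapping.keys a. Poly_Mapping.lookup m v = c}"
  by (auto simp: in_keys_iff lookup_slice split: if_splits)

lemma nonzero_has_key: "a \<noteq> 0 \<Longrightarrow> \<exists>m. m \<in> Poly_Mapping.keys a"
  by (metis in_keys_iff lookup_zero poly_mapping_eqI)

lemma slice_mult:
  fixes a b :: "('v, 'a::comm_semiring_0) lpoly"
  assumes "\<forall>m\<in>Poly_Mapping.keys a. Poly_Mapping.lookup m v \<le> Ma"
    "\<forall>m\<in>Poly_Mapping.keys b. Poly_Mapping.lookup m v \<le> Mb"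
  shows "Poly_Mapping.lookup (slice v Ma a * slice v Mb b) k =
    (if Poly_Mapping.lookup k v = Ma + Mb then Poly_Mapping.lookup (a * b) k else 0)"
proof -
  have "Poly_Mapping.lookup (slice v Ma a * slice v Mb b) k =
    (\<Sum>l\<in>Poly_Mapping.keys a. \<Sum>q\<in>Poly_Mapping.keys b.
      (Poly_Mapping.lookup (slice v Ma a) l * Poly_Mapping.lookup (slice v Mb b) q when k = l + q))"
    by (rule lookup_mult_sum) (auto simp: keys_slice)
  also have "\<dots> = (\<Sum>l\<in>Poly_Mapping.keys a. \<Sum>q\<in>Poly_Mapping.keys b.
      (if Poly_Mapping.lookup k v = Ma + Mb then
        (Poly_Mapping.lookup a l * Poly_Mapping.lookup b q when k = l + q) else 0))"
  proof (intro sum.cong refl)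
    fix l q assume l: "l \<in> Poly_Mapping.keys a" and q: "q \<in> Poly_Mapping.keys b"
    have "Poly_Mapping.lookup l v \<le> Ma" "Poly_Mapping.lookup q v \<le> Mb" using assms l q by auto
    then show "(Poly_Mapping.lookup (slice v Ma a) l * Poly_Mapping.lookup (slice v Mb b) q when k = l + q) =
      (if Poly_Mapping.lookup k v = Ma + Mb then
        (Poly_Mapping.lookup a l * Poly_Mapping.lookup b q when k = l + q) else 0)"
      by (auto simp: lookup_slice when_def lookup_add)
  qed
  also have "\<dots> = (if Poly_Mapping.lookup k v = Ma + Mb then Poly_Mapping.lookup (a * b) k else 0)"
    by (simp add: lookup_mult_sum[of "Poly_Mapping.keys a" "Poly_Mapping.keys b"])
  finally show ?thesis .
qed

lemma agree_empty_single:
  fixes a :: "('v, 'a::zero) lpoly"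
  assumes "agree {} a" "a \<noteq> 0"
  shows "\<exists>m. a = Poly_Mapping.single m (Poly_Mapping.lookup a m) \<and> Poly_Mapping.lookup a m \<noteq> 0"
proof -
  obtain m where m: "m \<in> Poly_Mapping.keys a" using nonzero_has_key assms by blast
  have eq: "m' = m" if "m' \<in> Poly_Mapping.keys a" for m'
    using assms(1) m that unfolding agree_def by (auto intro: poly_mapping_eqI)
  have "a = Poly_Mapping.single m (Poly_Mapping.lookup a m)"
  proof (rule poly_mapping_eqI)
    fix k show "Poly_Mapping.lookup a k = Poly_Mapping.lookup (Poly_Mapping.single m (Poly_Mapping.lookup a m)) k"
      using eq[of k] by (cases "k = m") (auto simp: lookup_single in_keys_iff)
  qed
  then show ?thesis using m by (auto simp: in_keys_iff)
qed

lemma NL: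
  fixes a b :: "('v, 'a::{factorial_semiring,idom}) lpoly"
  assumes "finite V" "prime_elem p"
  shows "agree V a \<Longrightarrow> agree V b \<Longrightarrow> a \<noteq> 0 \<Longrightarrow> b \<noteq> 0 \<Longrightarrow>
    \<forall>m\<in>Poly_Mapping.keys a. \<not> p dvd Poly_Mapping.lookup a m \<Longrightarrow>
    \<forall>m\<in>Poly_Mapping.keys b. \<not> p dvd Poly_Mapping.lookup b m \<Longrightarrow>
    \<exists>k. \<not> p dvd Poly_Mapping.lookup (a * b) k"
  using assms(1)
proof (induction V arbitrary: a b rule: finite_induct)
  case empty
  obtain ma where ma: "a = Poly_Mapping.single ma (Poly_Mapping.lookup a ma)" "Poly_Mapping.lookup a ma \<noteq> 0"
    using agree_empty_single empty by blast
  obtain mb where mb: "b = Poly_Mapping.single mb (Poly_Mapping.lookup b mb)" "Poly_Mapping.lookup b mb \<noteq> 0"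
    using agree_empty_single empty by blast
  have "a * b = Poly_Mapping.single (ma + mb) (Poly_Mapping.lookup a ma * Poly_Mapping.lookup b mb)"
    using ma(1) mb(1) mult_single by metis
  moreover have "\<not> p dvd Poly_Mapping.lookup a ma * Poly_Mapping.lookup b mb"
    using empty ma mb assms(2) by (simp add: prime_elem_dvd_mult_iff in_keys_iff)
  ultimately show ?case by (metis lookup_single_eq)
next
  case (insert v V)
  define Ma where "Ma = Max ((\<lambda>m. Poly_Mapping.lookup m v) ` Poly_Mapping.keys a)"
  define Mb where "Mb = Max ((\<lambda>m. Poly_Mapping.lookup m v) ` Poly_Mapping.keys b)"
  have kne: "Poly_Mapping.keys a \<noteq> {}" "Poly_Mapping.keys b \<noteq> {}"
    using nonzero_has_key insert.prems by blast+
  have leA: "\<forall>m\<in>Poly_Mapping.keys a. Poly_Mapping.lookup m v \<le> Ma"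
    unfolding Ma_def by auto
  have leB: "\<forall>m\<in>Poly_Mapping.keys b. Poly_Mapping.lookup m v \<le> Mb"
    unfolding Mb_def by auto
  have "Ma \<in> (\<lambda>m. Poly_Mapping.lookup m v) ` Poly_Mapping.keys a"
    unfolding Ma_def using kne by (intro Max_in) auto
  then obtain ma where ma: "ma \<in> Poly_Mapping.keys a" "Poly_Mapping.lookup ma v = Ma" by auto
  have "Mb \<in> (\<lambda>m. Poly_Mapping.lookup m v) ` Poly_Mapping.keys b"
    unfolding Mb_def using kne by (intro Max_in) auto
  then obtain mb where mb: "mb \<in> Poly_Mapping.keys b" "Poly_Mapping.lookup mb v = Mb" by auto
  have a'0: "slice v Ma a \<noteq> 0"
    using ma by (metis in_keys_iff lookup_slice lookup_zero)
  have b'0: "slice v Mb b \<noteq> 0"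
    using mb by (metis in_keys_iff lookup_slice lookup_zero)
  have ag_a: "agree V (slice v Ma a)"
    using insert.prems(1) unfolding agree_def keys_slice by (metis (mono_tags, lifting) insertE mem_Collect_eq)
  have ag_b: "agree V (slice v Mb b)"
    using insert.prems(2) unfolding agree_def keys_slice by (metis (mono_tags, lifting) insertE mem_Collect_eq)
  have nd_a: "\<forall>m\<in>Poly_Mapping.keys (slice v Ma a). \<not> p dvd Poly_Mapping.lookup (slice v Ma a) m"
    using insert.prems(5) by (auto simp: keys_slice lookup_slice)
  have nd_b: "\<forall>m\<in>Poly_Mapping.keys (slice v Mb b). \<not> p dvd Poly_Mapping.lookup (slice v Mb b) m"
    using insert.prems(6) by (auto simp: keys_slice lookup_slice)
  obtain k where k: "\<not> p dvd Poly_Mapping.lookup (slice v Ma a * slice v Mb b) k"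
    using insert.IH[OF ag_a ag_b a'0 b'0 nd_a nd_b] by blast
  then show ?case using slice_mult[OF leA leB, of k] by (auto split: if_splits)
qed

lemma dvd_coeff_mult:
  fixes x y :: "('v, 'a::{factorial_semiring,idom}) lpoly"
  assumes "p \<noteq> 0" "\<forall>k. p dvd Poly_Mapping.lookup x k"
  shows "\<forall>k. p dvd Poly_Mapping.lookup (x * y) k"
proof -
  have "x * y = lconst p * (Poly_Mapping.map (\<lambda>z. z div p) x * y)"
    using coeff_dvd_lconst[OF assms] by (metis mult.assoc)
  then show ?thesis by (metis dvd_triv_left lookup_lconst_mult)
qed

lemma PL:
  fixes a b :: "('v, 'a::{factorial_semiring,idom}) lpoly"
  assumes p: "prime_elem p" and d: "\<forall>k. p dvd Poly_Mapping.lookup (a * b) k"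
  shows "(\<forall>k. p dvd Poly_Mapping.lookup a k) \<or> (\<forall>k. p dvd Poly_Mapping.lookup b k)"
proof (rule ccontr)
  assume nc: "\<not> ((\<forall>k. p dvd Poly_Mapping.lookup a k) \<or> (\<forall>k. p dvd Poly_Mapping.lookup b k))"
  have p0: "p \<noteq> 0" using p by (rule prime_elem_not_zeroI)
  define an where "an = Poly_Mapping.mapp (\<lambda>m z. if p dvd z then 0 else z) a"
  define bn where "bn = Poly_Mapping.mapp (\<lambda>m z. if p dvd z then 0 else z) b"
  have lan: "Poly_Mapping.lookup an k = (if p dvd Poly_Mapping.lookup a k then 0 else Poly_Mapping.lookup a k)" for k
    by (auto simp: an_def lookup_mapp when_def in_keys_iff)
  have lbn: "Poly_Mapping.lookup bn k = (if p dvd Poly_Mapping.lookup b k then 0 else Poly_Mapping.lookup b k)" for k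
    by (auto simp: bn_def lookup_mapp when_def in_keys_iff)
  define ap where "ap = a - an"
  define bp where "bp = b - bn"
  have apd: "\<forall>k. p dvd Poly_Mapping.lookup ap k" by (simp add: ap_def lookup_minus lan)
  have bpd: "\<forall>k. p dvd Poly_Mapping.lookup bp k" by (simp add: bp_def lookup_minus lbn)
  have eq: "an * bn = a * b - ap * b - an * bp"
    by (simp add: ap_def bp_def algebra_simps)
  have d1: "\<forall>k. p dvd Poly_Mapping.lookup (ap * b) k" using dvd_coeff_mult[OF p0 apd] by blast
  have d2: "\<forall>k. p dvd Poly_Mapping.lookup (bp * an) k" using dvd_coeff_mult[OF p0 bpd] by blast
  have dn: "\<forall>k. p dvd Poly_Mapping.lookup (an * bn) k"
    using d d1 d2 by (simp add: eq lookup_minus mult.commute[of an bp] dvd_diff)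
  from nc obtain ka kb where ka: "\<not> p dvd Poly_Mapping.lookup a ka" and kb: "\<not> p dvd Poly_Mapping.lookup b kb"
    by blast
  have an0: "an \<noteq> 0" using ka by (metis lan lookup_zero dvd_0_right)
  have bn0: "bn \<noteq> 0" using kb by (metis lbn lookup_zero dvd_0_right)
  define V where "V = (\<Union>m\<in>Poly_Mapping.keys an \<union> Poly_Mapping.keys bn. Poly_Mapping.keys m)"
  have fV: "finite V" unfolding V_def by simp
  have aga: "agree V an" unfolding agree_def V_def by (auto simp: in_keys_iff)
  have agb: "agree V bn" unfolding agree_def V_def by (auto simp: in_keys_iff)
  have nda: "\<forall>m\<in>Poly_Mapping.keys an. \<not> p dvd Poly_Mapping.lookup an m"
    by (auto simp: lan in_keys_iff)
  have ndb: "\<forall>m\<in>Poly_Mapping.keys bn. \<not> p dvd Poly_Mapping.lookup bn m"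
    by (auto simp: lbn in_keys_iff)
  show False using NL[OF fV p aga agb an0 bn0 nda ndb] dn by blast
qed

lemma EPL:
  fixes c :: "'a::{factorial_semiring,idom}"
  shows "c \<noteq> 0 \<Longrightarrow> lconst c * (f :: ('v, 'a) lpoly) = a * b \<Longrightarrow>
    \<exists>c1 c2 a' b'. c = c1 * c2 \<and> a = lconst c1 * a' \<and> b = lconst c2 * b'"
proof (induction c arbitrary: f a b rule: prime_divisors_induct)
  case zero then show ?case by simp
next
  case (unit x)
  then obtain w where w: "1 = x * w" by (auto elim: dvdE)
  have "a = lconst x * (lconst w * a)" by (simp add: lconst_mult_assoc w[symmetric])
  moreover have "b = lconst 1 * b" by simp
  ultimately show ?case by (metis mult_1_right)
next
  case (factor q x)
  have q: "prime_elem q" using factor.hyps by blast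
  have x0: "x \<noteq> 0" and q0: "q \<noteq> 0" using factor.prems(1) by auto
  have e: "lconst q * (lconst x * f) = a * b" using factor.prems(2) by (simp add: lconst_mult_assoc)
  have "\<forall>k. q dvd Poly_Mapping.lookup (a * b) k" by (simp add: e[symmetric])
  from PL[OF q this] show ?case
  proof
    assume "\<forall>k. q dvd Poly_Mapping.lookup a k"
    then obtain a1 where a1: "a = lconst q * a1" using coeff_dvd_lconst[OF q0] by blast
    have "lconst q * (lconst x * f) = lconst q * (a1 * b)" using e a1 by (simp add: mult.assoc)
    then have "lconst x * f = a1 * b" using lconst_cancel[OF q0] by blast
    from factor.IH[OF x0 this] obtain k1 k2 a'' b'' where
      h: "x = k1 * k2" "a1 = lconst k1 * a''" "b = lconst k2 * b''" by blast
    have "q * x = (q * k1) * k2" "a = lconst (q * k1) * a''"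
      using h a1 by (simp_all add: lconst_mult_assoc mult.assoc)
    then show ?thesis using h(3) by blast
  next
    assume "\<forall>k. q dvd Poly_Mapping.lookup b k"
    then obtain b1 where b1: "b = lconst q * b1" using coeff_dvd_lconst[OF q0] by blast
    have "lconst q * (lconst x * f) = lconst q * (a * b1)" using e b1 by (simp add: mult.left_commute)
    then have "lconst x * f = a * b1" using lconst_cancel[OF q0] by blast
    from factor.IH[OF x0 this] obtain k1 k2 a'' b'' where
      h: "x = k1 * k2" "a = lconst k1 * a''" "b1 = lconst k2 * b''" by blast
    have "q * x = k1 * (q * k2)" using h by (simp add: mult.left_commute)
    moreover have "b = lconst (q * k2) * b''" using h b1 by (simp add: lconst_mult_assoc)
    ultimately
    show ?thesis using h(2) by blast
  qed
qed

lemma fract_of_0 [simp]: "fract_of 0 = 0"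
  by (simp add: fract_of_def Zero_fract_def)

lemma fract_of_1 [simp]: "fract_of 1 = 1"
  by (simp add: fract_of_def One_fract_def)

lemma fract_of_eq_iff [simp]: "fract_of a = fract_of b \<longleftrightarrow> a = b"
  by (simp add: fract_of_def eq_fract)

lemma fract_of_eq_0_iff [simp]: "fract_of a = 0 \<longleftrightarrow> a = 0"
  using fract_of_eq_iff[of a 0] by simp

lemma fract_of_add: "fract_of (a + b) = fract_of a + fract_of b"
  by (simp add: fract_of_def)

lemma fract_of_mult: "fract_of (a * b) = fract_of a * fract_of b"
  by (simp add: fract_of_def)

lemma fract_of_sum: "fract_of (sum g X) = (\<Sum>x\<in>X. fract_of (g x))"
  by (induction X rule: infinite_finite_induct) (auto simp: fract_of_add)

lemma fract_of_when: "fract_of (x when P) = (fract_of x when P)"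
  by (simp add: when_def)

abbreviation FF :: "('v, 'a::idom) lpoly \<Rightarrow> ('v, 'a fract) lpoly" where
  "FF a \<equiv> Poly_Mapping.map fract_of a"

lemma lookup_FF: "Poly_Mapping.lookup (FF a) k = fract_of (Poly_Mapping.lookup a k)"
  by (simp add: map.rep_eq when_def)

lemma keys_FF: "Poly_Mapping.keys (FF a) = Poly_Mapping.keys a"
  by (simp add: in_keys_iff lookup_FF set_eq_iff)

lemma FF_inj: "FF a = FF b \<Longrightarrow> a = b"
  by (metis fract_of_eq_iff lookup_FF poly_mapping_eqI)

lemma FF_0: "FF 0 = 0"
  by (rule poly_mapping_eqI) (simp add: lookup_FF)

lemma FF_lconst: "FF (lconst c) = lconst (fract_of c)"
  by (simp add: lconst_def)

lemma FF_mult: "FF (a * b) = FF a * FF b"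
proof (rule poly_mapping_eqI)
  fix k
  have "Poly_Mapping.lookup (FF (a * b)) k = fract_of (\<Sum>l\<in>Poly_Mapping.keys a. \<Sum>q\<in>Poly_Mapping.keys b.
      (Poly_Mapping.lookup a l * Poly_Mapping.lookup b q when k = l + q))"
    by (simp add: lookup_FF lookup_mult_sum[of "Poly_Mapping.keys a" "Poly_Mapping.keys b"])
  also have "\<dots> = (\<Sum>l\<in>Poly_Mapping.keys a. \<Sum>q\<in>Poly_Mapping.keys b.
      (Poly_Mapping.lookup (FF a) l * Poly_Mapping.lookup (FF b) q when k = l + q))"
    by (simp add: fract_of_sum fract_of_when fract_of_mult lookup_FF)
  also have "\<dots> = Poly_Mapping.lookup (FF a * FF b) k"
    by (simp add: keys_FF lookup_mult_sum[of "Poly_Mapping.keys a" "Poly_Mapping.keys b"])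
  finally show "Poly_Mapping.lookup (FF (a * b)) k = Poly_Mapping.lookup (FF a * FF b) k" .
qed

lemma FF_in: "FF a \<in> lpoly_in T \<longleftrightarrow> a \<in> lpoly_in T"
  by (simp add: lpoly_in_def keys_FF)

lemma den_exists:
  fixes X :: "'a::idom fract set"
  shows "finite X \<Longrightarrow> \<exists>\<alpha>. \<alpha> \<noteq> 0 \<and> (\<forall>x\<in>X. \<exists>r. fract_of \<alpha> * x = fract_of r)"
proof (induction X rule: finite_induct)
  case empty then show ?case by (rule exI[of _ 1]) simp
next
  case (insert x X)
  then obtain \<alpha> where \<alpha>: "\<alpha> \<noteq> 0" "\<forall>y\<in>X. \<exists>r. fract_of \<alpha> * y = fract_of r" by blast
  obtain n d where x: "x = Fract n d" "d \<noteq> 0" by (cases x)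
  have "fract_of (\<alpha> * d) * x = Fract (\<alpha> * d * n) d"
    using x by (simp add: fract_of_def)
  also have "\<dots> = fract_of (\<alpha> * n)"
    unfolding fract_of_def using x(2) by (subst eq_fract(1)) (simp_all add: mult.commute mult.left_commute)
  finally have "fract_of (\<alpha> * d) * x = fract_of (\<alpha> * n)" .
  moreover have "\<exists>r. fract_of (\<alpha> * d) * y = fract_of r" if "y \<in> X" for y
  proof -
    from bspec[OF \<alpha>(2) that] obtain r where r: "fract_of \<alpha> * y = fract_of r" by (rule exE)
    have "fract_of (\<alpha> * d) * y = fract_of d * (fract_of \<alpha> * y)"
      unfolding fract_of_mult by (simp add: mult.commute mult.left_commute mult.assoc)
    also have "\<dots> = fract_of (d * r)" unfolding r fract_of_mult ..
    finally show ?thesis by blast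
  qed
  ultimately have "\<forall>y\<in>insert x X. \<exists>r. fract_of (\<alpha> * d) * y = fract_of r" by auto
  moreover have "\<alpha> * d \<noteq> 0" using \<alpha>(1) x(2) by simp
  ultimately show ?case by (intro exI[of _ "\<alpha> * d"] conjI)
qed

lemma clear_den:
  fixes A :: "('v, 'a::idom fract) lpoly"
  shows "\<exists>\<alpha> a. \<alpha> \<noteq> 0 \<and> lconst (fract_of \<alpha>) * A = FF a"
proof -
  obtain \<alpha> where \<alpha>: "\<alpha> \<noteq> 0" "\<forall>x\<in>Poly_Mapping.lookup A ` Poly_Mapping.keys A. \<exists>r. fract_of \<alpha> * x = fract_of r"
    using den_exists[of "Poly_Mapping.lookup A ` Poly_Mapping.keys A"] by auto
  define g where "g x = (SOME r. fract_of \<alpha> * x = fract_of r)" for x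
  have g: "fract_of (g (Poly_Mapping.lookup A k)) = fract_of \<alpha> * Poly_Mapping.lookup A k"
    if "Poly_Mapping.lookup A k \<noteq> 0" for k
  proof -
    have "\<exists>r. fract_of \<alpha> * Poly_Mapping.lookup A k = fract_of r" using \<alpha> that by (auto simp: in_keys_iff)
    then show ?thesis unfolding g_def by (metis (mono_tags, lifting) someI_ex)
  qed
  have "lconst (fract_of \<alpha>) * A = FF (Poly_Mapping.map g A)"
  proof (rule poly_mapping_eqI)
    fix k show "Poly_Mapping.lookup (lconst (fract_of \<alpha>) * A) k = Poly_Mapping.lookup (FF (Poly_Mapping.map g A)) k"
      using g[of k] by (auto simp: lookup_FF map.rep_eq when_def)
  qed
  then show ?thesis using \<alpha> by blast
qed

lemma unit_in_mult:
  fixes u w :: "('v, 'a::comm_ring_1) lpoly"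
  shows "unit_in (lpoly_in T) u \<Longrightarrow> unit_in (lpoly_in T) w \<Longrightarrow> unit_in (lpoly_in T) (u * w)"
  unfolding unit_in_def
proof (elim conjE bexE, intro conjI)
  fix x y assume *: "u \<in> lpoly_in T" "w \<in> lpoly_in T" "x \<in> lpoly_in T" "y \<in> lpoly_in T" "u * x = 1" "w * y = 1"
  show "u * w \<in> lpoly_in T" using * by (simp add: lpoly_in_mult)
  have "(u * w) * (x * y) = (u * x) * (w * y)" by (simp add: ac_simps)
  then have "(u * w) * (x * y) = 1" using * by simp
  then show "\<exists>z\<in>lpoly_in T. u * w * z = 1" using * by (meson lpoly_in_mult)
qed

lemma unit_in_lconst:
  fixes c :: "'a::field"
  shows "c \<noteq> 0 \<Longrightarrow> unit_in (lpoly_in T) (lconst c :: ('v, 'a) lpoly)"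
  unfolding unit_in_def
  by (intro conjI lpoly_in_lconst bexI[of _ "lconst (inverse c)"]) (simp_all add: lconst_mult_lconst)

lemma unit_in_FF:
  fixes u :: "('v, 'a::idom) lpoly"
  assumes "unit_in (lpoly_in T) u" shows "unit_in (lpoly_in T) (FF u)"
proof -
  obtain w where w: "u \<in> lpoly_in T" "w \<in> lpoly_in T" "u * w = 1" using assms unfolding unit_in_def by blast
  have FF1: "FF (1::('v, 'a) lpoly) = 1" by (metis FF_lconst fract_of_1 lconst_one)
  have "FF u * FF w = FF (u * w)" by (simp add: FF_mult)
  also have "\<dots> = 1" using w(3) FF1 by simp
  finally have "FF u * FF w = 1" .
  then show ?thesis unfolding unit_in_def using w by (auto simp: FF_in)
qed

lemma KU:
  fixes D :: "('v, 'a::idom fract) lpoly"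
  assumes "\<delta> \<noteq> 0" "D \<in> lpoly_in T" "lconst (fract_of \<delta>) * D = X" "unit_in (lpoly_in T) X"
  shows "unit_in (lpoly_in T) D"
proof -
  have "lconst (inverse (fract_of \<delta>)) * X = lconst (inverse (fract_of \<delta>) * fract_of \<delta>) * D"
    unfolding assms(3)[symmetric] by (rule lconst_mult_assoc)
  also have "\<dots> = D" using assms(1) by simp
  finally have "D = lconst (inverse (fract_of \<delta>)) * X" by simp
  then show ?thesis using unit_in_mult[OF unit_in_lconst assms(4)] assms(1) by simp
qed

lemma unit_in_FF_lconst:
  fixes d :: "('v, 'a::idom) lpoly"
  assumes "c \<noteq> 0" "unit_in (lpoly_in T) d"
  shows "unit_in (lpoly_in T) (FF (lconst c * d))"
  unfolding FF_mult FF_lconst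
  by (rule unit_in_mult[OF unit_in_lconst unit_in_FF]) (use assms in simp_all)

lemma FF_in_lconst_mult:
  fixes D :: "('v, 'a::idom fract) lpoly"
  assumes "D \<in> lpoly_in T" "lconst c * D = FF d"
  shows "d \<in> lpoly_in T"
  using lpoly_in_mult[OF lpoly_in_lconst assms(1)] assms(2) FF_in by metis

lemma HALF:
  fixes f :: "('v, 'a::{factorial_semiring,idom}) lpoly" and D E :: "('v, 'a fract) lpoly"
  assumes irr: "irred_in (lpoly_in T) f"
    and DE: "D \<in> lpoly_in T" "E \<in> lpoly_in T" "FF f = D * E"
    and dl: "\<delta> \<noteq> 0" "lconst (fract_of \<delta>) * D = FF d"
  shows "unit_in (lpoly_in T) D \<or> (unit_in (lpoly_in T) E \<and>
     (\<exists>c w e'. c \<noteq> 0 \<and> d = lconst c * (f * w) \<and> w \<in> lpoly_in T \<and> e' \<in> lpoly_in T \<and> w * e' = 1))"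
proof -
  obtain \<epsilon> e where ep: "\<epsilon> \<noteq> 0" "lconst (fract_of \<epsilon>) * E = FF e" using clear_den by blast
  have "FF (lconst (\<delta> * \<epsilon>) * f) = lconst (fract_of \<delta> * fract_of \<epsilon>) * (D * E)"
    by (simp add: FF_mult FF_lconst fract_of_mult DE(3))
  also have "\<dots> = (lconst (fract_of \<delta>) * D) * (lconst (fract_of \<epsilon>) * E)"
    by (simp add: lconst_mult_lconst[symmetric] ac_simps)
  also have "\<dots> = FF (d * e)" by (simp add: dl(2) ep(2) FF_mult)
  finally have eq: "lconst (\<delta> * \<epsilon>) * f = d * e" by (rule FF_inj)
  have de0: "\<delta> * \<epsilon> \<noteq> 0" using dl ep by simp
  from EPL[OF de0 eq] obtain c1 c2 d1 e1 where
    h: "\<delta> * \<epsilon> = c1 * c2" "d = lconst c1 * d1" "e = lconst c2 * e1" by blast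
  have c0: "c1 \<noteq> 0" "c2 \<noteq> 0" using h(1) de0 by auto
  have "lconst (c1 * c2) * f = lconst (\<delta> * \<epsilon>) * f" by (simp only: h(1))
  also have "\<dots> = d * e" by (rule eq)
  also have "\<dots> = lconst (c1 * c2) * (d1 * e1)" unfolding h(2,3)
    by (simp add: lconst_mult_lconst[symmetric] ac_simps)
  finally have fe: "lconst (c1 * c2) * f = lconst (c1 * c2) * (d1 * e1)" .
  have fde: "f = d1 * e1" using lconst_cancel[OF _ fe] c0 by simp
  have dS: "d \<in> lpoly_in T" using FF_in_lconst_mult[OF DE(1) dl(2)] .
  have eS: "e \<in> lpoly_in T" using FF_in_lconst_mult[OF DE(2) ep(2)] .
  have d1S: "d1 \<in> lpoly_in T"
    using dS h(2) keys_lconst_mult[OF c0(1), of d1] lpoly_in_keys_subset by blast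
  have e1S: "e1 \<in> lpoly_in T"
    using eS h(3) keys_lconst_mult[OF c0(2), of e1] lpoly_in_keys_subset by blast
  from irr d1S e1S fde have "unit_in (lpoly_in T) d1 \<or> unit_in (lpoly_in T) e1"
    unfolding irred_in_def by blast
  then show ?thesis
  proof
    assume "unit_in (lpoly_in T) d1"
    then have "unit_in (lpoly_in T) (FF (lconst c1 * d1))" using c0 by (intro unit_in_FF_lconst)
    then have "unit_in (lpoly_in T) D" using KU[OF dl(1) DE(1)] dl(2) h(2) by blast
    then show ?thesis by blast
  next
    assume u: "unit_in (lpoly_in T) e1"
    then have "unit_in (lpoly_in T) (FF (lconst c2 * e1))" using c0 by (intro unit_in_FF_lconst)
    then have uE: "unit_in (lpoly_in T) E" using KU[OF ep(1) DE(2)] ep(2) h(3) by blast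
    from u obtain w where w: "w \<in> lpoly_in T" "e1 * w = 1" unfolding unit_in_def by blast
    have "f * w = d1" using fde w(2) by (simp add: mult.assoc)
    then have "d = lconst c1 * (f * w)" using h(2) by simp
    moreover have "w * e1 = 1" using w(2) by (simp add: mult.commute)
    ultimately show ?thesis using uE c0 w(1) e1S by blast
  qed
qed

lemma IRR:
  fixes f :: "('v, 'a::{factorial_semiring,idom}) lpoly"
  assumes irr: "irred_in (lpoly_in T) f"
  shows "irred_in (lpoly_in T) (FF f)"
  unfolding irred_in_def
proof (intro conjI ballI impI)
  show "FF f \<in> lpoly_in T" using irr by (simp add: irred_in_def FF_in)
  show "FF f \<noteq> 0" using irr FF_inj FF_0 unfolding irred_in_def by metis
  fix A B assume AB: "A \<in> lpoly_in T" "B \<in> lpoly_in T" "FF f = A * B"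
  obtain \<alpha> a where "\<alpha> \<noteq> 0" "lconst (fract_of \<alpha>) * A = FF a" using clear_den by blast
  from HALF[OF irr AB this] show "unit_in (lpoly_in T) A \<or> unit_in (lpoly_in T) B" by blast
qed

lemma COP:
  fixes f1 f2 :: "('v, 'a::{factorial_semiring,idom}) lpoly"
  assumes irr1: "irred_in (lpoly_in T) f1" and irr2: "irred_in (lpoly_in T) f2"
    and cop: "coprime_in (lpoly_in T) f1 f2"
  shows "coprime_in (lpoly_in T) (FF f1) (FF f2)"
  unfolding coprime_in_def
proof (intro allI impI)
  fix D assume "dvd_in (lpoly_in T) D (FF f1) \<and> dvd_in (lpoly_in T) D (FF f2)"
  then obtain E1 E2 where DS: "D \<in> lpoly_in T" and E1: "E1 \<in> lpoly_in T" "FF f1 = D * E1"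
    and E2: "E2 \<in> lpoly_in T" "FF f2 = D * E2"
    unfolding dvd_in_def by blast
  obtain \<delta> d where dl: "\<delta> \<noteq> 0" "lconst (fract_of \<delta>) * D = FF d" using clear_den by blast
  show "unit_in (lpoly_in T) D"
  proof (rule ccontr)
    assume nu: "\<not> unit_in (lpoly_in T) D"
    from HALF[OF irr1 DS E1 dl] nu obtain c1 w1 e1 where
      h1: "c1 \<noteq> 0" "d = lconst c1 * (f1 * w1)" "w1 \<in> lpoly_in T" "e1 \<in> lpoly_in T" "w1 * e1 = 1"
      by blast
    from HALF[OF irr2 DS E2 dl] nu obtain c3 w2 e2 where
      h2: "c3 \<noteq> 0" "d = lconst c3 * (f2 * w2)" "w2 \<in> lpoly_in T" "e2 \<in> lpoly_in T" "w2 * e2 = 1"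
      by blast
    have f1S: "f1 \<in> lpoly_in T" and f2S: "f2 \<in> lpoly_in T" using irr1 irr2 by (auto simp: irred_in_def)
    have "lconst c1 * f1 = lconst c1 * (f1 * w1) * e1" using h1(5) by (simp add: mult.assoc)
    also have "\<dots> = lconst c3 * (f2 * w2) * e1" using h1(2) h2(2) by simp
    finally have eq: "lconst c1 * f1 = lconst c3 * (f2 * w2 * e1)" by (simp add: mult.assoc)
    from EPL[OF h1(1) eq] obtain k1 k2 and g b' :: "('v, 'a) lpoly" where
      k: "c1 = k1 * k2" "lconst c3 = lconst k1 * g" "f2 * w2 * e1 = lconst k2 * b'" by blast
    have k0: "k1 \<noteq> 0" "k2 \<noteq> 0" using k(1) h1(1) by auto
    have "lconst (k1 * k2) * f1 = lconst c3 * (f2 * w2 * e1)" using eq k(1) by simp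
    also have "\<dots> = (lconst k1 * g) * (lconst k2 * b')" by (simp only: k(2,3))
    also have "\<dots> = lconst (k1 * k2) * (g * b')" by (simp add: lconst_mult_lconst[symmetric] ac_simps)
    finally have "lconst (k1 * k2) * f1 = lconst (k1 * k2) * (g * b')" .
    then have "f1 = g * b'" by (rule lconst_cancel[rotated]) (use k0 in simp)
    then have f1e: "f1 = b' * g" by (simp add: mult.commute)
    have "f2 * w2 * e1 * (w1 * e2) = f2 * (w2 * e2) * (w1 * e1)" by (simp add: ac_simps)
    then have "f2 = f2 * w2 * e1 * (w1 * e2)" using h1(5) h2(5) by simp
    also have "\<dots> = (lconst k2 * b') * (w1 * e2)" by (simp only: k(3))
    also have "\<dots> = b' * (lconst k2 * w1 * e2)" by (simp add: ac_simps)
    finally have f2e: "f2 = b' * (lconst k2 * w1 * e2)" .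
    have f2wS: "f2 * w2 * e1 \<in> lpoly_in T" by (intro lpoly_in_mult f2S h2(3) h1(4))
    have "Poly_Mapping.keys b' = Poly_Mapping.keys (f2 * w2 * e1)"
      unfolding k(3) by (rule keys_lconst_mult[OF k0(2), symmetric])
    then have b'S: "b' \<in> lpoly_in T" using lpoly_in_keys_subset[OF f2wS, of b'] by simp
    have "Poly_Mapping.keys g = Poly_Mapping.keys (lconst c3 :: ('v, 'a) lpoly)"
      unfolding k(2) by (rule keys_lconst_mult[OF k0(1), symmetric])
    then have gS: "g \<in> lpoly_in T" using lpoly_in_keys_subset[OF lpoly_in_lconst[of c3 T], of g] by simp
    have w3S: "lconst k2 * w1 * e2 \<in> lpoly_in T"
      by (intro lpoly_in_mult lpoly_in_lconst h1(3) h2(4))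
    have "dvd_in (lpoly_in T) b' f1" unfolding dvd_in_def using b'S f1S gS f1e by blast
    moreover have "dvd_in (lpoly_in T) b' f2" unfolding dvd_in_def using b'S f2S w3S f2e by blast
    ultimately have ub: "unit_in (lpoly_in T) b'" using cop unfolding coprime_in_def by blast
    have uw1: "unit_in (lpoly_in T) w1" unfolding unit_in_def using h1(3,4,5) by blast
    have gk: "FF g * lconst (fract_of k1) = lconst (fract_of c3)"
      using arg_cong[OF k(2), of FF] by (simp add: FF_mult FF_lconst mult.commute)
    have "FF g * (lconst (fract_of k1) * lconst (inverse (fract_of c3))) =
      (FF g * lconst (fract_of k1)) * lconst (inverse (fract_of c3))" by (simp only: mult.assoc)
    also have "\<dots> = lconst (fract_of c3) * lconst (inverse (fract_of c3))" by (simp only: gk)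
    also have "\<dots> = 1" using h2(1) by (simp add: lconst_mult_lconst)
    finally have "FF g * (lconst (fract_of k1) * lconst (inverse (fract_of c3))) = 1" .
    moreover have "FF g \<in> lpoly_in T" using gS FF_in by blast
    moreover have "lconst (fract_of k1) * lconst (inverse (fract_of c3)) \<in> lpoly_in T"
      by (simp add: lpoly_in_mult lpoly_in_lconst)
    ultimately have ug: "unit_in (lpoly_in T) (FF g)" unfolding unit_in_def by blast
    have "FF d = lconst (fract_of c1) * (FF g * (FF b' * FF w1))"
      using h1(2) f1e by (simp add: FF_mult FF_lconst ac_simps)
    moreover have "unit_in (lpoly_in T) (lconst (fract_of c1) * (FF g * (FF b' * FF w1)))"
      using h1(1) by (intro unit_in_mult unit_in_lconst ug unit_in_FF ub uw1) simp
    ultimately have "unit_in (lpoly_in T) D" using KU[OF dl(1) DS dl(2)] by simp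
    with nu show False by blast
  qed
qed

theorem lemma3p4:
  fixes N :: nat
    and v :: "nat \<Rightarrow> 'l::ab_group_add"
    and \<Phi> \<Psi> :: "(nat, 'r::{factorial_semiring, idom}) lpoly"
    and H :: "'l set"
    and f :: "'l \<Rightarrow> ('l, 'r) lpoly"
  assumes N_pos: "N \<ge> 1"
    and v_distinct: "inj_on v {..<N}"
    and v_generate: "\<forall>x::'l. \<exists>a b :: nat \<Rightarrow> nat.
                        x = (\<Sum>i<N. nsm (a i) (v i)) - (\<Sum>i<N. nsm (b i) (v i))"
    and v_indep: "\<forall>a :: nat \<Rightarrow> nat. (\<Sum>i<N. nsm (a i) (v i)) = 0 \<longrightarrow> (\<forall>i<N. a i = 0)"
    and Phi_in: "\<Phi> \<in> lpoly_in {..<N}"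
    and Phi_irred: "irred_in (lpoly_in {..<N}) \<Phi>" "\<not> unit_in (lpoly_in {..<N}) \<Phi>"
    and Phi_not_monomial: "card (Poly_Mapping.keys \<Phi>) \<noteq> 1"
    and Phi_depends: "\<forall>i<N. \<exists>m\<in>Poly_Mapping.keys \<Phi>. Poly_Mapping.lookup m i \<noteq> 0"
    and vN_min: "cle N v (v (N - 1)) 0" "\<forall>i<N. cle N v (v (N - 1)) (v i)"
    and Psi_in: "\<Psi> \<in> lpoly_in {..<N}"
    and Psi_irred: "irred_in (lpoly_in {..<N}) \<Psi>" "\<not> unit_in (lpoly_in {..<N}) \<Psi>"
    and Psi_solves: "lpoly_sat N \<Psi> lconst
                       (\<lambda>i. if i < N - 1 then lvar i else \<Phi>) (lvar (N - 1))"
    and H_reg: "light_cone_regular N v H"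
    and f_init: "\<forall>h\<in>init_boundary N v H. f h = lvar h"
    and f_rec: "\<forall>h\<in>H - init_boundary N v H.
                  lpoly_sat N \<Phi> lconst (\<lambda>i. f (h + v i)) (f h)"
    and laurent: "\<forall>h\<in>H. f h \<in> lpoly_in (init_boundary N v H)"
    and irred: "\<forall>h\<in>H. irred_in (lpoly_in (init_boundary N v H)) (f h)"
    and coprime: "\<forall>h1\<in>H. \<forall>h2\<in>H. h1 \<noteq> h2 \<longrightarrow>
                    coprime_in (lpoly_in (init_boundary N v H)) (f h1) (f h2)"
  shows "(\<forall>h\<in>H. Poly_Mapping.map fract_of (f h) \<in> lpoly_in (init_boundary N v H))
       \<and> (\<forall>h\<in>H - init_boundary N v H.
            irred_in (lpoly_in (init_boundary N v H)) (Poly_Mapping.map fract_of (f h)))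
       \<and> (\<forall>h1\<in>H. \<forall>h2\<in>H. h1 \<noteq> h2 \<longrightarrow>
            coprime_in (lpoly_in (init_boundary N v H))
              (Poly_Mapping.map fract_of (f h1)) (Poly_Mapping.map fract_of (f h2)))"
  proof (intro conjI ballI impI)
  fix h assume "h \<in> H"
  then show "Poly_Mapping.map fract_of (f h) \<in> lpoly_in (init_boundary N v H)"
    using laurent FF_in by blast
next
  fix h assume "h \<in> H - init_boundary N v H"
  then show "irred_in (lpoly_in (init_boundary N v H)) (Poly_Mapping.map fract_of (f h))"
    using irred IRR by blast
next
  fix h1 h2 assume "h1 \<in> H" "h2 \<in> H" "h1 \<noteq> h2"
  then show "coprime_in (lpoly_in (init_boundary N v H))
              (Poly_Mapping.map fract_of (f h1)) (Poly_Mapping.map fract_of (f h2))"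
    using COP irred coprime by blast
qed

end
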